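(* Let $f:[0,T]\times\mathbb{R}\times\mathbb{R}\to\mathbb{R}$ be continuous and suppose there is a constant $c$ with $|f(t,x,y)|\le c<\frac{a}{2T}$ for all $(t,x,y)\in[0,T]\times\mathbb{R}\times\mathbb{R}$. Then the problem $$(\varphi(u'))'=f(t,u,u')\ \text{on }[0,T],\qquad u(T)=u(0)=u'(T)$$ has at least one solution.
   Context: $T>0$, $a>0$, and $\varphi:\mathbb{R}\to(-a,a)$ is a homeomorphism with $\varphi(0)=0$. A solution is a function $u\in C^1([0,T],\mathbb{R})$ satisfying the boundary conditions such that $\varphi\circ u'$ is continuously differentiable and the equation holds for all $t\in[0,T]$. *)

theory Defs
  imports "HOL-Analysis.Analysis"
begin

definition is_solution ::
  "(real \<Rightarrow> real) \<Rightarrow> (real \<Rightarrow> real \<Rightarrow> real \<Rightarrow> real) \<Rightarrow> real \<Rightarrow> (real \<Rightarrow> real) \<Rightarrow> bool" where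
  "is_solution \<phi> f T u \<longleftrightarrow>
     (\<exists>u' w.
        (\<forall>t\<in>{0..T}. (u has_real_derivative u' t) (at t within {0..T})) \<and>
        continuous_on {0..T} u' \<and>
        (\<forall>t\<in>{0..T}. ((\<lambda>s. \<phi> (u' s)) has_real_derivative w t) (at t within {0..T})) \<and>
        continuous_on {0..T} w \<and>
        (\<forall>t\<in>{0..T}. w t = f t (u t) (u' t)) \<and>
        u T = u 0 \<and> u 0 = u' T)"

end

theory Submission
  imports Defs "HOL-Homology.Homology" "HOL-Complex_Analysis.Great_Picard"
begin


lemma nsphere_eq: "nsphere n = top_of_set {x::nat\<Rightarrow>real. (\<Sum>i\<le>n. x i ^ 2) = 1 \<and> (\<forall>i>n. x i = 0)}"
  by (simp add: nsphere euclidean_product_topology)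

lemma brouwer_D:
  fixes g :: "(nat \<Rightarrow> real) \<Rightarrow> (nat \<Rightarrow> real)" and n :: nat
  defines "D \<equiv> {x::nat\<Rightarrow>real. (\<Sum>i\<le>n. x i ^ 2) \<le> 1 \<and> (\<forall>i>n. x i = 0)}"
  assumes contg: "continuous_on D g" and gD: "g ` D \<subseteq> D"
  shows "\<exists>x\<in>D. g x = x"
proof (rule ccontr)
  assume nf: "\<not> (\<exists>x\<in>D. g x = x)"
  define S where "S = {x::nat\<Rightarrow>real. (\<Sum>i\<le>n. x i ^ 2) = 1 \<and> (\<forall>i>n. x i = 0)}"
  define N where "N = (\<lambda>z::nat\<Rightarrow>real. sqrt (\<Sum>i\<le>n. z i ^ 2))"
  have SD: "S \<subseteq> D" unfolding S_def D_def by auto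
  have gi: "g x i = 0" if "x \<in> D" "i > n" for x i
    using gD that unfolding D_def by auto
  have gsum: "(\<Sum>i\<le>n. g x i ^ 2) \<le> 1" if "x \<in> D" for x
    using gD that unfolding D_def by auto
  have Nz: "N z = 0 \<Longrightarrow> i \<le> n \<Longrightarrow> z i = 0" for z i
    unfolding N_def by (simp add: sum_nonneg_eq_0_iff)
  have Npos1: "N (\<lambda>i. x i - s * g x i) > 0" if x: "x \<in> S" and s: "s \<in> {0..1}" for x s
  proof (rule ccontr)
    assume "\<not> ?thesis"
    moreover have "N (\<lambda>i. x i - s * g x i) \<ge> 0" unfolding N_def by (simp add: sum_nonneg)
    ultimately have "N (\<lambda>i. x i - s * g x i) = 0" by linarith
    then have e: "x i = s * g x i" if "i \<le> n" for i using Nz[OF _ that] by fastforce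
    have xD: "x \<in> D" using x SD by auto
    have "1 = (\<Sum>i\<le>n. x i ^ 2)" using x unfolding S_def by auto
    also have "\<dots> = s^2 * (\<Sum>i\<le>n. g x i ^ 2)" using e
      by (simp add: sum_distrib_left power_mult_distrib)
    also have "\<dots> \<le> s^2" using gsum[OF xD] s by (simp add: mult_left_le)
    finally have "1 \<le> s^2" . then have "s = 1" using s mult_left_mono[of s 1 s] by (auto simp: power2_eq_square)
    then have "g x = x" using e gi[OF xD] x unfolding S_def by (auto intro!: ext) (metis not_le)
    then show False using nf xD by auto
  qed
  have Npos2: "N (\<lambda>i. y i - g y i) > 0" if y: "y \<in> D" for y
  proof (rule ccontr)
    assume "\<not> ?thesis"
    moreover have "N (\<lambda>i. y i - g y i) \<ge> 0" unfolding N_def by (simp add: sum_nonneg)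
    ultimately have "N (\<lambda>i. y i - g y i) = 0" by linarith
    then have e: "y i = g y i" if "i \<le> n" for i using Nz[OF _ that] by fastforce
    then have "g y = y" using e gi[OF y] y unfolding D_def by (auto intro!: ext) (metis not_le)
    then show False using nf y by auto
  qed
  have unit: "(\<Sum>i\<le>n. (z i / N z) ^ 2) = 1" if "N z > 0" for z
  proof -
    have "(\<Sum>i\<le>n. z i ^ 2) > 0" using that unfolding N_def by auto
    then show ?thesis unfolding N_def
      by (simp add: power_divide sum_divide_distrib[symmetric] sum_nonneg)
  qed
  define H where "H = (\<lambda>p::real\<times>(nat\<Rightarrow>real). \<lambda>i. (snd p i - fst p * g (snd p) i) / N (\<lambda>j. snd p j - fst p * g (snd p) j))"
  define h where "h = (\<lambda>y::nat\<Rightarrow>real. \<lambda>i. (y i - g y i) / N (\<lambda>j. y j - g y j))"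
  define K where "K = (\<lambda>p::real\<times>(nat\<Rightarrow>real). h (\<lambda>i. (1 - fst p) * snd p i))"
  have cg: "continuous_on A (\<lambda>p. g (snd p) i)" if "snd ` A \<subseteq> D" for A :: "(real \<times> (nat\<Rightarrow>real)) set" and i
    using continuous_on_compose2[OF continuous_on_product_then_coordinatewise[OF contg] continuous_on_snd[OF continuous_on_id] that] by simp
  have cs: "continuous_on A (\<lambda>p. snd p i)" for A :: "(real \<times> (nat\<Rightarrow>real)) set" and i
    by (rule continuous_on_product_then_coordinatewise, rule continuous_on_snd, rule continuous_on_id)
  have contH: "continuous_on ({0..1} \<times> S) H"
    unfolding H_def N_def
  proof (rule continuous_on_coordinatewise_then_product)
    fix i
    have c1: "continuous_on ({0..1} \<times> S) (\<lambda>p. snd p i - fst p * g (snd p) i)" for i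
    proof -
      have "snd ` ({0..1} \<times> S) \<subseteq> D" using SD by auto
      from cg[OF this] show ?thesis
        by (intro continuous_on_diff continuous_on_mult cs continuous_on_fst continuous_on_id)
    qed
    show "continuous_on ({0..1} \<times> S) (\<lambda>p. (snd p i - fst p * g (snd p) i) / sqrt (\<Sum>j\<le>n. (snd p j - fst p * g (snd p) j)\<^sup>2))"
      apply (intro continuous_on_divide c1 continuous_on_real_sqrt continuous_on_sum continuous_on_power)
      using Npos1 unfolding N_def by (auto simp del: real_sqrt_gt_0_iff) (metis less_irrefl real_sqrt_zero)
  qed
  define m where "m = (\<lambda>p::real\<times>(nat\<Rightarrow>real). \<lambda>i. (1 - fst p) * snd p i)"
  have mD: "m p \<in> D" if pin: "p \<in> {0..1} \<times> S" for p
  proof -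
    obtain s x where p: "p = (s,x)" "s \<in> {0..1}" "x \<in> S" using pin by (cases p) auto
    have "(\<Sum>i\<le>n. m p i ^ 2) = (1-s)^2 * (\<Sum>i\<le>n. x i ^ 2)"
      unfolding m_def p by (simp add: sum_distrib_left power_mult_distrib)
    also have "\<dots> = (1-s)^2" using p unfolding S_def by simp
    also have "\<dots> \<le> 1" using p by (simp add: abs_le_iff power_le_one_iff)
    finally show ?thesis using p unfolding D_def S_def m_def by auto
  qed
  have cm: "continuous_on ({0..1} \<times> S) m"
    unfolding m_def
    by (rule continuous_on_coordinatewise_then_product, rule continuous_on_mult, rule continuous_on_diff, rule continuous_on_const, rule continuous_on_fst, rule continuous_on_id, rule cs)
  have cgm: "continuous_on ({0..1} \<times> S) (\<lambda>p. g (m p) i)" for i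
    by (rule continuous_on_compose2[OF continuous_on_product_then_coordinatewise[OF contg] cm]) (use mD in auto)
  have cmi: "continuous_on ({0..1} \<times> S) (\<lambda>p. m p i)" for i
    by (rule continuous_on_product_then_coordinatewise[OF cm])
  have contK: "continuous_on ({0..1} \<times> S) K"
    unfolding K_def h_def N_def
  proof (rule continuous_on_coordinatewise_then_product)
    fix i
    have c1: "continuous_on ({0..1} \<times> S) (\<lambda>p. m p i - g (m p) i)" for i
      by (intro continuous_on_diff cmi cgm)
    show "continuous_on ({0..1} \<times> S) (\<lambda>p. ((1 - fst p) * snd p i - g (\<lambda>i. (1 - fst p) * snd p i) i) / sqrt (\<Sum>j\<le>n. ((1 - fst p) * snd p j - g (\<lambda>i. (1 - fst p) * snd p i) j)\<^sup>2))"
      apply (intro continuous_on_divide continuous_on_real_sqrt continuous_on_sum continuous_on_power)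
      using c1 apply (simp add: m_def)
      using c1 apply (simp add: m_def)
      using Npos2 mD unfolding N_def m_def by (auto simp del: real_sqrt_gt_0_iff) (metis less_irrefl real_sqrt_zero)
  qed
  have zi: "z i = 0" if "z = (\<lambda>i. y i - s * g y i)" "y \<in> D" "i > n" for z y s i
    using that gi[OF that(2,3)] unfolding D_def by auto
  have HS: "H p \<in> S" if pin: "p \<in> {0..1} \<times> S" for p
  proof -
    obtain s x where p: "p = (s,x)" "s \<in> {0..1}" "x \<in> S" using pin by (cases p) auto
    have "x \<in> D" using p SD by auto
    then show ?thesis using Npos1[OF p(3,2)] unit[OF Npos1[OF p(3,2)]] zi[OF refl, of x _ s]
      unfolding H_def p S_def by auto
  qed
  have hS: "h y \<in> S" if y: "y \<in> D" for y
    using Npos2[OF y] unit[OF Npos2[OF y]] zi[OF refl y, of _ 1] unfolding h_def S_def by auto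
  have KS: "K p \<in> S" if pin: "p \<in> {0..1} \<times> S" for p
  proof -
    have e: "K p = h (m p)" unfolding m_def K_def by simp
    show ?thesis unfolding e by (rule hS[OF mD[OF pin]])
  qed
  have H0: "H (0,x) = x" if "x \<in> S" for x
    using that unfolding H_def S_def N_def by auto
  have H1: "H (1,x) = K (0,x)" for x
    unfolding H_def K_def h_def by simp
  have K1: "K (1,x) = h (\<lambda>i. 0)" for x
    unfolding K_def by simp
  have cmS: "continuous_map (prod_topology (top_of_set {0..1}) (nsphere n)) (nsphere n) F"
    if "continuous_on ({0..1} \<times> S) F" "\<And>p. p \<in> {0..1} \<times> S \<Longrightarrow> F p \<in> S" for F
    unfolding nsphere_eq S_def[symmetric] prod_topology_subtopology_eu
    using that by (auto simp: continuous_map_in_subtopology)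
  have hom1: "homotopic_with (\<lambda>x. True) (nsphere n) (nsphere n) id (\<lambda>x. K (0,x))"
    apply (subst homotopic_with, simp)
    apply (rule exI[of _ H])
    using cmS[OF contH HS] H0 H1 unfolding nsphere_eq S_def[symmetric] by auto
  have hom2: "homotopic_with (\<lambda>x. True) (nsphere n) (nsphere n) (\<lambda>x. K (0,x)) (\<lambda>x. h (\<lambda>i. 0))"
    apply (subst homotopic_with, simp)
    apply (rule exI[of _ K])
    using cmS[OF contK KS] K1 by auto
  have "contractible_space (nsphere n)"
    unfolding contractible_space_def using homotopic_with_trans[OF hom1 hom2] by blast
  then show False using non_contractible_space_nsphere by blast
qed

lemma schauder_approx:
  fixes F :: "'a::real_normed_vector \<Rightarrow> 'a"
  assumes K: "compact K" "convex K" "K \<noteq> {}" and contF: "continuous_on K F"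
    and FK: "F ` K \<subseteq> K" and eps: "\<epsilon> > 0"
  shows "\<exists>x\<in>K. norm (F x - x) \<le> \<epsilon>"
proof -
  have "\<exists>P. finite P \<and> P \<subseteq> K \<and> K \<subseteq> (\<Union>x\<in>P. ball x \<epsilon>)"
    using seq_compact_imp_totally_bounded[OF compact_imp_seq_compact[OF K(1)]] eps by simp
  then obtain P where P: "finite P" "P \<subseteq> K" "K \<subseteq> (\<Union>x\<in>P. ball x \<epsilon>)"
    by blast
  obtain N :: nat and p where Np: "P = p ` {i. i < N}" using finite_imp_nat_seg_image_inj_on[OF P(1)] by blast
  have "N \<noteq> 0" using Np P K(3) by auto
  define n where "n = N - 1"
  have Pn: "P = p ` {..n}" using Np \<open>N \<noteq> 0\<close> unfolding n_def by (auto simp: less_Suc_eq_le[symmetric] lessThan_def[symmetric])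
  have pK: "p i \<in> K" if "i \<le> n" for i using Pn P that by auto
  define \<mu> where "\<mu> = (\<lambda>i y. max 0 (\<epsilon> - norm (y - p i)))"
  have \<mu>pos: "(\<Sum>i\<le>n. \<mu> i y) > 0" if yK: "y \<in> K" for y
  proof -
    obtain i where i: "i \<le> n" "y \<in> ball (p i) \<epsilon>" using P(3) yK Pn by auto
    have "\<mu> i y > 0" using i unfolding \<mu>_def by (auto simp: dist_norm norm_minus_commute)
    moreover have "\<mu> j y \<ge> 0" for j unfolding \<mu>_def by auto
    ultimately show ?thesis using i(1) by (intro sum_pos2[of _ i]) auto
  qed
  define w where "w = (\<lambda>y. \<lambda>i. if i \<le> n then \<mu> i y / (\<Sum>j\<le>n. \<mu> j y) else 0)"
  define Ds where "Ds = {x::nat\<Rightarrow>real. (\<Sum>i\<le>n. x i ^ 2) \<le> 1 \<and> (\<forall>i>n. x i = 0)}"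
  define Del where "Del = {x::nat\<Rightarrow>real. (\<forall>i\<le>n. x i \<ge> 0) \<and> (\<Sum>i\<le>n. x i) = 1 \<and> (\<forall>i>n. x i = 0)}"
  define s where "s = (\<lambda>x::nat\<Rightarrow>real. \<Sum>j\<le>n. max (x j) 0)"
  define r where "r = (\<lambda>x::nat\<Rightarrow>real. \<lambda>i. if i \<le> n then (max (x i) 0 + max 0 (1 - s x) / real (Suc n)) / max (s x) 1 else 0)"
  define e where "e = (\<lambda>x::nat\<Rightarrow>real. \<Sum>i\<le>n. x i *\<^sub>R p i)"
  have DelDs: "Del \<subseteq> Ds"
  proof
    fix x assume x: "x \<in> Del"
    have "x i ^ 2 \<le> x i" if "i \<le> n" for i
    proof -
      have "x i \<le> 1" using x that unfolding Del_def
        using member_le_sum[of i "{..n}" x] by auto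
      then show ?thesis using x that unfolding Del_def by (auto simp: power2_eq_square mult_left_le)
    qed
    then have "(\<Sum>i\<le>n. x i ^ 2) \<le> (\<Sum>i\<le>n. x i)" by (intro sum_mono) auto
    then show "x \<in> Ds" using x unfolding Del_def Ds_def by auto
  qed
  have wDel: "w y \<in> Del" if "y \<in> K" for y
    using \<mu>pos[OF that] unfolding w_def Del_def
    by (auto simp: \<mu>_def sum_divide_distrib[symmetric])
  have rDel: "r x \<in> Del" for x
  proof -
    have s0: "s x \<ge> 0" unfolding s_def by (auto intro: sum_nonneg)
    have "(\<Sum>i\<le>n. r x i) = (\<Sum>i\<le>n. (max (x i) 0 + max 0 (1 - s x) / real (Suc n))) / max (s x) 1"
      unfolding r_def by (simp add: sum_divide_distrib)
    also have "\<dots> = (s x + max 0 (1 - s x)) / max (s x) 1"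
      unfolding s_def by (simp add: sum.distrib)
    also have "\<dots> = 1" by (auto simp: max_def)
    finally show ?thesis unfolding Del_def r_def using s0
      by (auto intro!: divide_nonneg_pos add_nonneg_nonneg)
  qed
  have rid: "r x = x" if "x \<in> Del" for x
  proof -
    have "s x = (\<Sum>j\<le>n. x j)" unfolding s_def using that unfolding Del_def by (intro sum.cong) auto
    then have "s x = 1" using that unfolding Del_def by simp
    then show ?thesis using that unfolding r_def Del_def by (auto intro!: ext simp: max_def not_le) (meson antisym)
  qed
  have eK: "e x \<in> K" if "x \<in> Del" for x
    unfolding e_def using that pK unfolding Del_def by (intro convex_sum K(2)) auto
  have cr: "continuous_on UNIV r"
    unfolding r_def
  proof (rule continuous_on_coordinatewise_then_product)
    fix i
    have cs: "continuous_on UNIV s" unfolding s_def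
      by (intro continuous_on_sum continuous_on_max continuous_on_product_coordinates continuous_on_const)
    show "continuous_on UNIV (\<lambda>x. if i \<le> n then (max (x i) 0 + max 0 (1 - s x) / real (Suc n)) / max (s x) 1 else 0)"
    proof (cases "i \<le> n")
      case True
      then show ?thesis
        by (simp, intro continuous_on_divide continuous_on_add continuous_on_max continuous_on_product_coordinates
            continuous_on_const continuous_on_diff cs) auto
    qed simp
  qed
  have ce: "continuous_on UNIV e"
    unfolding e_def by (intro continuous_on_sum continuous_on_scaleR continuous_on_product_coordinates continuous_on_const)
  have cw: "continuous_on K w"
    unfolding w_def
  proof (rule continuous_on_coordinatewise_then_product)
    fix i
    show "continuous_on K (\<lambda>y. if i \<le> n then \<mu> i y / (\<Sum>j\<le>n. \<mu> j y) else 0)"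
    proof (cases "i \<le> n")
      case True
      have cmu: "continuous_on K (\<mu> j)" for j unfolding \<mu>_def
        by (intro continuous_on_max continuous_on_const continuous_on_diff continuous_on_norm continuous_on_id)
      show ?thesis using True \<mu>pos
        by (simp, intro continuous_on_divide continuous_on_sum cmu) force
    qed simp
  qed
  define g where "g = (\<lambda>x. w (F (e (r x))))"
  have rng: "g x \<in> Del" for x unfolding g_def using wDel FK eK rDel by blast
  have cg: "continuous_on Ds g"
  proof -
    have c1: "continuous_on Ds (\<lambda>x. e (r x))"
      using continuous_on_subset[OF continuous_on_compose2[OF ce cr subset_UNIV] subset_UNIV] .
    have c2: "continuous_on Ds (\<lambda>x. F (e (r x)))"
      by (rule continuous_on_compose2[OF contF c1]) (use eK rDel in auto)
    show ?thesis unfolding g_def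
      by (rule continuous_on_compose2[OF cw c2]) (use eK rDel FK in auto)
  qed
  obtain z where z: "z \<in> Ds" "g z = z"
    using brouwer_D[of n g] cg rng DelDs unfolding Ds_def by blast
  have zD: "z \<in> Del" using rng z by metis
  define x where "x = e z"
  have xK: "x \<in> K" using eK zD x_def by auto
  have wz: "w (F x) = z" using z rid[OF zD] unfolding g_def x_def by simp
  have sum1: "(\<Sum>i\<le>n. z i) = 1" using zD unfolding Del_def by auto
  have "F x - x = (\<Sum>i\<le>n. z i *\<^sub>R (F x - p i))"
    unfolding x_def e_def by (simp add: scaleR_diff_right sum_subtractf scaleR_sum_left[symmetric] sum1)
  then have "norm (F x - x) \<le> (\<Sum>i\<le>n. z i * norm (F x - p i))"
    using zD unfolding Del_def by (auto intro!: order_trans[OF norm_sum] sum_mono)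
  also have "\<dots> \<le> (\<Sum>i\<le>n. z i * \<epsilon>)"
  proof (rule sum_mono)
    fix i assume i: "i \<in> {..n}"
    show "z i * norm (F x - p i) \<le> z i * \<epsilon>"
    proof (cases "z i = 0")
      case False
      then have "\<mu> i (F x) \<noteq> 0" using wz i unfolding w_def by auto
      then have "norm (F x - p i) < \<epsilon>" unfolding \<mu>_def by (auto simp: max_def split: if_splits)
      then show ?thesis using zD i unfolding Del_def by (auto intro: mult_left_mono)
    qed simp
  qed
  also have "\<dots> = \<epsilon>" using sum1 by (simp add: sum_distrib_right[symmetric])
  finally show ?thesis using xK by blast
qed

lemma schauder:
  fixes F :: "'a::real_normed_vector \<Rightarrow> 'a"
  assumes K: "compact K" "convex K" "K \<noteq> {}" and contF: "continuous_on K F"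
    and FK: "F ` K \<subseteq> K"
  shows "\<exists>x\<in>K. F x = x"
proof -
  have "\<forall>k::nat. \<exists>x\<in>K. norm (F x - x) \<le> 1 / real (Suc k)"
    using schauder_approx[OF K contF FK] by simp
  then obtain x where x: "\<And>k. x k \<in> K" "\<And>k. norm (F (x k) - x k) \<le> 1 / real (Suc k)"
    by metis
  obtain l q where lq: "l \<in> K" "strict_mono q" "(x \<circ> q) \<longlonglongrightarrow> l"
    using seq_compactE[OF compact_imp_seq_compact[OF K(1)], of x] x(1) by blast
  have t1: "(\<lambda>k. F (x (q k)) - x (q k)) \<longlonglongrightarrow> F l - l"
    using continuous_on_tendsto_compose[OF contF lq(3)[unfolded comp_def] lq(1)] x(1) lq(3)
    by (intro tendsto_diff) (auto simp: comp_def)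
  have t0: "(\<lambda>k. F (x (q k)) - x (q k)) \<longlonglongrightarrow> 0"
  proof (rule tendsto_norm_zero_cancel, rule Lim_null_comparison[OF _ LIMSEQ_inverse_real_of_nat])
    show "\<forall>\<^sub>F k in sequentially. norm (norm (F (x (q k)) - x (q k))) \<le> inverse (real (Suc k))"
    proof (rule always_eventually, rule allI)
      fix k
      have "1 / real (Suc (q k)) \<le> 1 / real (Suc k)"
        using seq_suble[OF lq(2), of k] by (simp add: frac_le)
      then show "norm (norm (F (x (q k)) - x (q k))) \<le> inverse (real (Suc k))"
        using x(2)[of "q k"] by (simp add: inverse_eq_divide)
    qed
  qed
  have "F l - l = 0" using LIMSEQ_unique[OF t1 t0] .
  then show ?thesis using lq(1) by auto
qed



thm IVT IVT2 homeomorphism_def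
lemma homeo_sign:
  fixes \<phi> \<psi> :: "real \<Rightarrow> real"
  assumes hom: "homeomorphism UNIV {-a<..<a} \<phi> \<psi>" and p0: "\<phi> 0 = 0"
  obtains \<sigma> :: real where "\<sigma> = 1 \<or> \<sigma> = -1"
    "\<And>z. z \<in> {-a<..<a} \<Longrightarrow> z \<ge> 0 \<Longrightarrow> \<sigma> * \<psi> z \<ge> 0"
    "\<And>z. z \<in> {-a<..<a} \<Longrightarrow> z \<le> 0 \<Longrightarrow> \<sigma> * \<psi> z \<le> 0"
proof -
  have inv: "\<psi> (\<phi> x) = x" for x using hom unfolding homeomorphism_def by auto
  have inv2: "\<phi> (\<psi> z) = z" if "z \<in> {-a<..<a}" for z using hom that unfolding homeomorphism_def by auto
  have cphi: "continuous_on UNIV \<phi>" using hom unfolding homeomorphism_def by auto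
  define \<sigma> :: real where "\<sigma> = (if \<phi> 1 > 0 then 1 else -1)"
  define h where "h = (\<lambda>x. \<sigma> * \<phi> x)"
  have hinj: "h x = h y \<Longrightarrow> x = y" for x y
    unfolding h_def \<sigma>_def by (metis inv mult_cancel_left zero_neq_one neg_equal_0_iff_equal one_neq_neg_one)
  have h0: "h 0 = 0" unfolding h_def p0 by simp
  have h1: "h 1 > 0"
  proof -
    have "\<phi> 1 \<noteq> 0" using inv[of 1] inv[of 0] p0 by auto
    then show ?thesis unfolding h_def \<sigma>_def by auto
  qed
  have hc: "isCont h x" for x
    unfolding h_def using cphi by (intro continuous_intros) (simp add: continuous_on_eq_continuous_at)
  have A: "h x > 0" if "x > 0" for x
  proof (rule ccontr)
    assume "\<not> h x > 0"
    then have hx: "h x \<le> 0" by simp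
    obtain y where "y \<ge> min x 1" "y \<le> max x 1" "h y = 0"
    proof (cases "x \<le> 1")
      case True
      have "\<exists>y\<ge>x. y \<le> 1 \<and> h y = 0" by (rule IVT[where f=h]) (use True hx h1 hc in auto)
      then show ?thesis using that True by force
    next
      case False
      have "\<exists>y\<ge>1. y \<le> x \<and> h y = 0" by (rule IVT2[where f=h]) (use False hx h1 hc in auto)
      then show ?thesis using that False by force
    qed
    then show False using hinj[of y 0] h0 \<open>x > 0\<close> by auto
  qed
  have B: "h x < 0" if "x < 0" for x
  proof (rule ccontr)
    assume "\<not> h x < 0"
    moreover have "h x \<noteq> 0" using hinj[of x 0] h0 that by auto
    ultimately have hx: "h x > 0" by simp
    define v where "v = min (h x) (h 1)"
    have v: "v > 0" "v \<le> h x" "v \<le> h 1" using hx h1 unfolding v_def by auto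
    have "\<exists>y\<ge>x. y \<le> 0 \<and> h y = v" by (rule IVT2[where f=h]) (use v h0 hc that in auto)
    then obtain y1 where y1: "x \<le> y1" "y1 \<le> 0" "h y1 = v" by blast
    have "\<exists>y\<ge>0. y \<le> 1 \<and> h y = v" by (rule IVT[where f=h]) (use v h0 hc in auto)
    then obtain y2 where y2: "0 \<le> y2" "y2 \<le> 1" "h y2 = v" by blast
    have "y1 = y2" using hinj y1 y2 by simp
    then have "y1 = 0" using y1 y2 by simp
    then show False using y1 h0 v by simp
  qed
  show ?thesis
  proof (rule that[of \<sigma>])
    show "\<sigma> = 1 \<or> \<sigma> = -1" unfolding \<sigma>_def by auto
    fix z assume z: "z \<in> {-a<..<a}"
    have hz: "h (\<psi> z) = \<sigma> * z" unfolding h_def using inv2[OF z] by simp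
    show "z \<ge> 0 \<Longrightarrow> \<sigma> * \<psi> z \<ge> 0"
    proof (rule ccontr)
      assume "z \<ge> 0" "\<not> \<sigma> * \<psi> z \<ge> 0"
      then show False using A[of "\<psi> z"] B[of "\<psi> z"] hz unfolding \<sigma>_def
        by (auto split: if_splits simp: mult_le_0_iff)
    qed
    show "z \<le> 0 \<Longrightarrow> \<sigma> * \<psi> z \<le> 0"
    proof (rule ccontr)
      assume "z \<le> 0" "\<not> \<sigma> * \<psi> z \<le> 0"
      then show False using A[of "\<psi> z"] B[of "\<psi> z"] hz unfolding \<sigma>_def
        by (auto split: if_splits simp: mult_le_0_iff)
    qed
  qed
qed



definition cl :: "real \<Rightarrow> real \<Rightarrow> real" where "cl T t = max 0 (min T t)"

definition KK :: "real \<Rightarrow> real \<Rightarrow> real \<Rightarrow> ((real \<Rightarrow>\<^sub>C real) \<times> real) set" where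
  "KK T c M = {p. (\<forall>t. apply_bcontfun (fst p) t = apply_bcontfun (fst p) (cl T t)) \<and> apply_bcontfun (fst p) 0 = 0 \<and>
       (\<forall>s t. \<bar>apply_bcontfun (fst p) s - apply_bcontfun (fst p) t\<bar> \<le> c * \<bar>s - t\<bar>) \<and> \<bar>snd p\<bar> \<le> M}"

lemma cl_in: "T \<ge> 0 \<Longrightarrow> cl T t \<in> {0..T}" unfolding cl_def by auto
lemma cl_id: "t \<in> {0..T} \<Longrightarrow> cl T t = t" unfolding cl_def by auto
lemma cl_lip: "T \<ge> 0 \<Longrightarrow> \<bar>cl T s - cl T t\<bar> \<le> \<bar>s - t\<bar>" unfolding cl_def by auto
lemma cl_cont: "continuous_on A (cl T)" unfolding cl_def by (intro continuous_intros)

lemma conv_lip: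
  fixes u v a1 a2 b1 b2 L :: real
  assumes uv: "0 \<le> u" "0 \<le> v" "u + v = 1" and "\<bar>a1 - a2\<bar> \<le> L" "\<bar>b1 - b2\<bar> \<le> L"
  shows "\<bar>(u * a1 + v * b1) - (u * a2 + v * b2)\<bar> \<le> L"
proof -
  have "\<bar>(u * a1 + v * b1) - (u * a2 + v * b2)\<bar> = \<bar>u * (a1 - a2) + v * (b1 - b2)\<bar>"
    by (simp add: algebra_simps)
  also have "\<dots> \<le> \<bar>u * (a1 - a2)\<bar> + \<bar>v * (b1 - b2)\<bar>" by (rule abs_triangle_ineq)
  also have "\<dots> = u * \<bar>a1 - a2\<bar> + v * \<bar>b1 - b2\<bar>" using uv by (simp add: abs_mult)
  also have "\<dots> \<le> u * L + v * L" using assms by (intro add_mono mult_left_mono) auto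
  also have "\<dots> = L" using uv by (metis distrib_right mult_1)
  finally show ?thesis .
qed

lemma KK_convex: "convex (KK T c M)"
  unfolding convex_def
proof (intro ballI allI impI)
  fix p q :: "(real \<Rightarrow>\<^sub>C real) \<times> real" and u v :: real
  assume p: "p \<in> KK T c M" and q: "q \<in> KK T c M" and uv: "0 \<le> u" "0 \<le> v" "u + v = 1"
  have lip: "\<bar>(u * fst p s + v * fst q s) - (u * fst p t + v * fst q t)\<bar> \<le> c * \<bar>s - t\<bar>" for s t
    using p q unfolding KK_def by (intro conv_lip uv) auto
  have "\<bar>(u * snd p + v * 0) - (u * 0 + v * (- snd q))\<bar> \<le> M"
    using p q unfolding KK_def by (intro conv_lip uv) auto
  then have "\<bar>u * snd p + v * snd q\<bar> \<le> M" by simp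
  then show "u *\<^sub>R p + v *\<^sub>R q \<in> KK T c M"
    using p q lip unfolding KK_def by auto
qed

lemma KK_nonempty: "M \<ge> 0 \<Longrightarrow> c \<ge> 0 \<Longrightarrow> (0, 0) \<in> KK T c M"
  unfolding KK_def by auto

lemma KK_bound: "p \<in> KK T c M \<Longrightarrow> T \<ge> 0 \<Longrightarrow> c \<ge> 0 \<Longrightarrow> \<bar>apply_bcontfun (fst p) t\<bar> \<le> c * T"
proof -
  assume p: "p \<in> KK T c M" and T: "T \<ge> 0" and c: "c \<ge> 0"
  have "\<bar>apply_bcontfun (fst p) t\<bar> = \<bar>apply_bcontfun (fst p) (cl T t) - apply_bcontfun (fst p) 0\<bar>"
    using p unfolding KK_def by auto
  also have "\<dots> \<le> c * \<bar>cl T t - 0\<bar>" using p unfolding KK_def by blast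
  also have "\<dots> \<le> c * T" using p T cl_in[OF T, of t] unfolding KK_def
    by (intro mult_left_mono) (auto simp: c)
  finally show ?thesis .
qed

lemma KK_compact:
  assumes T: "T \<ge> 0" and c: "c \<ge> 0"
  shows "compact (KK T c M)"
  unfolding compact_eq_seq_compact_metric seq_compact_def
proof (intro allI impI)
  fix p :: "nat \<Rightarrow> (real \<Rightarrow>\<^sub>C real) \<times> real"
  assume pK: "\<forall>n. p n \<in> KK T c M"
  define F where "F = (\<lambda>n x. apply_bcontfun (fst (p n)) x)"
  have Fb: "norm (F n x) \<le> c * T" for n x using KK_bound[OF spec[OF pK] T c] unfolding F_def by simp
  have Flip: "\<bar>F n s - F n t\<bar> \<le> c * \<bar>s - t\<bar>" for n s t using pK unfolding F_def KK_def by blast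
  obtain g k1 where g: "continuous_on {0..T} g" "strict_mono (k1 :: nat \<Rightarrow> nat)"
     "\<And>e. 0 < e \<Longrightarrow> \<exists>N. \<forall>n x. n \<ge> N \<and> x \<in> {0..T} \<longrightarrow> norm (F (k1 n) x - g x) < e"
  proof (rule Arzela_Ascoli[of "{0..T}" F "c * T"])
    show "compact {0..T::real}" by simp
    show "norm (F n x) \<le> c * T" for n x by (rule Fb)
    fix x e :: real assume "x \<in> {0..T}" "0 < e"
    show "\<exists>d>0. \<forall>n y. y \<in> {0..T} \<and> norm (x - y) < d \<longrightarrow> norm (F n x - F n y) < e"
    proof (intro exI[of _ "e / (c + 1)"] conjI allI impI)
      show "e / (c + 1) > 0" using \<open>0 < e\<close> c by simp
      fix n y assume "y \<in> {0..T} \<and> norm (x - y) < e / (c + 1)"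
      then have "\<bar>x - y\<bar> * (c + 1) < e" using c by (simp add: pos_less_divide_eq)
      moreover have "\<bar>F n x - F n y\<bar> \<le> c * \<bar>x - y\<bar>" by (rule Flip)
      moreover have "c * \<bar>x - y\<bar> \<le> \<bar>x - y\<bar> * (c + 1)" by (simp add: algebra_simps)
      ultimately show "norm (F n x - F n y) < e" by simp
    qed
  qed (rule that; assumption)+
  have F0: "F n 0 = 0" for n using pK unfolding F_def KK_def by blast
  have Fcl: "F n t = F n (cl T t)" for n t using pK unfolding F_def KK_def by blast
  have gpt: "(\<lambda>n. F (k1 n) x) \<longlonglongrightarrow> g x" if x: "x \<in> {0..T}" for x
    unfolding lim_sequentially dist_real_def
  proof (intro allI impI)
    fix e :: real assume "e > 0"
    then obtain N where "\<forall>n x. n \<ge> N \<and> x \<in> {0..T} \<longrightarrow> norm (F (k1 n) x - g x) < e" using g(3) by blast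
    then show "\<exists>N. \<forall>n\<ge>N. \<bar>F (k1 n) x - g x\<bar> < e" using x by auto
  qed
  have g0: "g 0 = 0" using gpt[of 0] T F0 LIMSEQ_unique[OF _ tendsto_const] by fastforce
  have glip: "\<bar>g x - g y\<bar> \<le> c * \<bar>x - y\<bar>" if x: "x \<in> {0..T}" and y: "y \<in> {0..T}" for x y
  proof (rule field_le_epsilon)
    fix e :: real assume e: "e > 0"
    obtain N where N: "\<forall>n x. n \<ge> N \<and> x \<in> {0..T} \<longrightarrow> norm (F (k1 n) x - g x) < e / 2" using g(3) e
      by (meson half_gt_zero)
    have "\<bar>F (k1 N) x - g x\<bar> < e/2" "\<bar>F (k1 N) y - g y\<bar> < e/2" using N x y by auto
    moreover have "\<bar>F (k1 N) x - F (k1 N) y\<bar> \<le> c * \<bar>x - y\<bar>" by (rule Flip)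
    ultimately show "\<bar>g x - g y\<bar> \<le> c * \<bar>x - y\<bar> + e" by linarith
  qed
  have gb: "norm (g x) \<le> c * T" if x: "x \<in> {0..T}" for x
  proof -
    have "\<bar>g x - g 0\<bar> \<le> c * \<bar>x - 0\<bar>" using glip[OF x, of 0] T by auto
    also have "\<dots> \<le> c * T" using x c by (intro mult_left_mono) auto
    finally show ?thesis using g0 by simp
  qed
  define Gf where "Gf = (\<lambda>t. g (cl T t))"
  have Gfb: "Gf \<in> bcontfun"
  proof (rule bcontfun_normI[of _ "c * T"])
    show "continuous_on UNIV Gf" unfolding Gf_def
      by (rule continuous_on_compose2[OF g(1) cl_cont]) (use cl_in[OF T] in auto)
    show "norm (Gf x) \<le> c * T" for x unfolding Gf_def using gb cl_in[OF T] by auto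
  qed
  have GfE: "apply_bcontfun (Bcontfun Gf) = Gf" using Gfb by (simp add: Bcontfun_inverse)
  obtain l2 k2 where k2: "l2 \<in> {-M..M}" "strict_mono k2" "((\<lambda>n. snd (p (k1 n))) \<circ> k2) \<longlonglongrightarrow> l2"
  proof (rule seq_compactE[OF compact_imp_seq_compact[of "{-M..M}"], of "\<lambda>n. snd (p (k1 n))"])
    show "compact {-M..M}" by simp
    show "\<forall>n. snd (p (k1 n)) \<in> {- M..M}"
    proof
      fix n have "\<bar>snd (p (k1 n))\<bar> \<le> M" using pK unfolding KK_def by blast
      then show "snd (p (k1 n)) \<in> {- M..M}" by (simp add: abs_le_iff)
    qed
  qed (rule that)
  have GfE2: "apply_bcontfun (Bcontfun Gf) t = g (cl T t)" for t using GfE unfolding Gf_def by simp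
  define l where "l = (Bcontfun Gf, l2)"
  have lK: "l \<in> KK T c M"
  proof -
    have A: "apply_bcontfun (fst l) = (\<lambda>t. g (cl T t))" using GfE unfolding l_def Gf_def by simp
    have "\<bar>g (cl T s) - g (cl T t)\<bar> \<le> c * \<bar>s - t\<bar>" for s t
      using glip[OF cl_in[OF T] cl_in[OF T], of s t] mult_left_mono[OF cl_lip[OF T] c, of s t] by linarith
    moreover have "cl T (cl T t) = cl T t" for t using cl_id[OF cl_in[OF T]] .
    moreover have "cl T 0 = 0" using T unfolding cl_def by simp
    ultimately show ?thesis unfolding KK_def using A g0 k2(1) unfolding l_def by (auto simp: abs_le_iff)
  qed
  have conv1: "(\<lambda>n. fst (p (k1 (k2 n)))) \<longlonglongrightarrow> Bcontfun Gf"
    unfolding lim_sequentially dist_norm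
  proof (intro allI impI)
    fix e :: real assume e: "e > 0"
    obtain N where N: "\<forall>n x. n \<ge> N \<and> x \<in> {0..T} \<longrightarrow> norm (F (k1 n) x - g x) < e / 2" using g(3) e
      by (meson half_gt_zero)
    show "\<exists>N. \<forall>n\<ge>N. norm (fst (p (k1 (k2 n))) - Bcontfun Gf) < e"
    proof (intro exI allI impI)
      fix n assume n: "n \<ge> N"
      have "k2 n \<ge> N" using seq_suble[OF k2(2), of n] n by simp
      have "norm (fst (p (k1 (k2 n))) - Bcontfun Gf) \<le> e / 2"
      proof (rule norm_bound)
        fix t
        have "norm (F (k1 (k2 n)) (cl T t) - g (cl T t)) < e / 2"
          using N \<open>k2 n \<ge> N\<close> cl_in[OF T] by blast
        then show "norm (apply_bcontfun (fst (p (k1 (k2 n))) - Bcontfun Gf) t) \<le> e / 2"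
          using Fcl[of "k1 (k2 n)" t] by (simp add: GfE2 F_def)
      qed
      then show "norm (fst (p (k1 (k2 n))) - Bcontfun Gf) < e" using e by simp
    qed
  qed
  have conv: "(p \<circ> (k1 \<circ> k2)) \<longlonglongrightarrow> l"
  proof -
    have "(\<lambda>n. (fst (p (k1 (k2 n))), snd (p (k1 (k2 n))))) \<longlonglongrightarrow> l"
      unfolding l_def using conv1 k2(3) by (intro tendsto_Pair) (auto simp: comp_def)
    then show ?thesis by (simp add: comp_def)
  qed
  show "\<exists>l\<in>KK T c M. \<exists>r. strict_mono r \<and> (p \<circ> r) \<longlonglongrightarrow> l"
    using lK conv strict_mono_o[OF g(2) k2(2)] by blast
qed




lemma int_lip:
  fixes h :: "real \<Rightarrow> real"
  assumes ch: "continuous_on {0..T} h" and hb: "\<And>x. x \<in> {0..T} \<Longrightarrow> \<bar>h x\<bar> \<le> L"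
    and s: "s \<in> {0..T}" and t: "t \<in> {0..T}"
  shows "\<bar>integral {0..t} h - integral {0..s} h\<bar> \<le> L * \<bar>t - s\<bar>"
proof -
  have L: "L \<ge> 0" using hb[of 0] s by force
  have key: "\<bar>integral {0..y} h - integral {0..x} h\<bar> \<le> L * (y - x)" if xy: "x \<le> y" "x \<in> {0..T}" "y \<in> {0..T}" for x y
  proof -
    have int: "h integrable_on {0..y}"
      by (rule integrable_continuous_interval, rule continuous_on_subset[OF ch]) (use xy in auto)
    have "integral {0..x} h + integral {x..y} h = integral {0..y} h"
      by (rule Henstock_Kurzweil_Integration.integral_combine) (use xy int in auto)
    moreover have "h integrable_on {x..y}"
      by (rule integrable_continuous_interval, rule continuous_on_subset[OF ch]) (use xy in auto)
    then have hi: "(h has_integral integral {x..y} h) (cbox x y)" by (simp add: cbox_interval integrable_integral)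
    have "norm (integral {x..y} h) \<le> L * (y - x)"
      using has_integral_bound[OF L hi] hb xy by (auto simp: cbox_interval)
    ultimately show ?thesis using xy by simp
  qed
  show ?thesis
  proof (cases "s \<le> t")
    case True then show ?thesis using key[OF True s t] by simp
  next
    case False then show ?thesis using key[of t s] s t by (simp add: abs_minus_commute)
  qed
qed

lemma int_bound:
  fixes h :: "real \<Rightarrow> real"
  assumes ch: "continuous_on {0..T} h" and hb: "\<And>x. x \<in> {0..T} \<Longrightarrow> \<bar>h x\<bar> \<le> L"
    and t: "t \<in> {0..T}"
  shows "\<bar>integral {0..t} h\<bar> \<le> L * t"
  using int_lip[OF ch hb _ t, of 0] t by auto

lemma int_cont:
  fixes h :: "real \<Rightarrow> real"
  assumes ch: "continuous_on {0..T} h" and hb: "\<And>x. x \<in> {0..T} \<Longrightarrow> \<bar>h x\<bar> \<le> L"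
  shows "continuous_on {0..T} (\<lambda>t. integral {0..t} h)"
proof (cases "T \<ge> 0")
  case True
  have L: "L \<ge> 0" using hb[of 0] True by force
  show ?thesis
    by (rule lipschitz_on_continuous_on[of L]) (use int_lip[OF ch hb] L in \<open>auto simp: lipschitz_on_def dist_real_def\<close>)
qed simp

lemma dist_triple: "dist (s::real, x::real, y::real) (s, x', y') \<le> \<bar>x - x'\<bar> + \<bar>y - y'\<bar>"
proof -
  have "dist (s, x, y) (s, x', y') = sqrt ((x - x')^2 + (y - y')^2)"
    by (simp add: dist_Pair_Pair dist_real_def)
  also have "\<dots> \<le> sqrt ((x - x')^2) + sqrt ((y - y')^2)" by (rule sqrt_add_le_add_sqrt) auto
  finally show ?thesis by simp
qed




lemma clamp_lip: "\<bar>max (- m) (min m x) - max (- m) (min m y)\<bar> \<le> \<bar>x - y\<bar>" if "(m::real) \<ge> 0" for m x y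
  using that by (auto simp: max_def min_def abs_le_iff)

lemma int_diff_bound:
  fixes h1 h2 :: "real \<Rightarrow> real"
  assumes c1: "continuous_on {0..T} h1" and c2: "continuous_on {0..T} h2"
    and hb: "\<And>x. x \<in> {0..T} \<Longrightarrow> \<bar>h1 x - h2 x\<bar> \<le> L" and t: "t \<in> {0..T}"
  shows "\<bar>integral {0..t} h1 - integral {0..t} h2\<bar> \<le> L * t"
proof -
  have i1: "h1 integrable_on {0..t}" by (rule integrable_continuous_interval, rule continuous_on_subset[OF c1]) (use t in auto)
  have i2: "h2 integrable_on {0..t}" by (rule integrable_continuous_interval, rule continuous_on_subset[OF c2]) (use t in auto)
  have "integral {0..t} h1 - integral {0..t} h2 = integral {0..t} (\<lambda>x. h1 x - h2 x)"
    using integral_diff[OF i1 i2] by simp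
  also have "\<bar>\<dots>\<bar> \<le> L * t" by (rule int_bound[OF continuous_on_diff[OF c1 c2] hb t])
  finally show ?thesis .
qed

theorem theorem4p1:
  fixes \<phi> :: "real \<Rightarrow> real" and f :: "real \<Rightarrow> real \<Rightarrow> real \<Rightarrow> real"
    and T a c :: real
  assumes "T > 0" and "a > 0"
    and "\<exists>\<psi>. homeomorphism UNIV {-a<..<a} \<phi> \<psi>"
    and "\<phi> 0 = 0"
    and "continuous_on ({0..T} \<times> UNIV \<times> UNIV) (\<lambda>(t, x, y). f t x y)"
    and "\<forall>t\<in>{0..T}. \<forall>x y. \<bar>f t x y\<bar> \<le> c"
    and "c < a / (2 * T)"
  shows "\<exists>u. is_solution \<phi> f T u"
proof -
  obtain \<psi> where hom: "homeomorphism UNIV {-a<..<a} \<phi> \<psi>" using assms(3) by blast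
  have T: "T > 0" and T0: "T \<ge> 0" using assms(1) by auto
  note fcont = assms(5)
  have fb: "t \<in> {0..T} \<Longrightarrow> \<bar>f t x y\<bar> \<le> c" for t x y using assms(6) by blast
  have c0: "c \<ge> 0" using fb[of 0 0 0] T0 by force
  define m0 where "m0 = c * T"
  define R where "R = 2 * m0"
  have m00: "m0 \<ge> 0" unfolding m0_def using c0 T0 by simp
  have Ra: "R < a"
  proof -
    have "c * (2 * T) < a" using assms(7) T by (simp add: pos_less_divide_eq)
    then show ?thesis unfolding R_def m0_def by (simp add: algebra_simps)
  qed
  have R0: "R \<ge> 0" unfolding R_def using m00 by simp
  obtain \<sigma> :: real where \<sigma>: "\<sigma> = 1 \<or> \<sigma> = -1"
    "\<And>z. z \<in> {-a<..<a} \<Longrightarrow> z \<ge> 0 \<Longrightarrow> \<sigma> * \<psi> z \<ge> 0"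
    "\<And>z. z \<in> {-a<..<a} \<Longrightarrow> z \<le> 0 \<Longrightarrow> \<sigma> * \<psi> z \<le> 0"
    using homeo_sign[OF hom assms(4)] by blast
  have Rsub: "{-R..R} \<subseteq> {-a<..<a}" using Ra by auto
  have \<psi>c: "continuous_on {-R..R} \<psi>"
    using hom Rsub unfolding homeomorphism_def by (auto intro: continuous_on_subset)
  have \<phi>\<psi>: "\<phi> (\<psi> z) = z" if "z \<in> {-a<..<a}" for z using hom that unfolding homeomorphism_def by auto
  obtain B where B: "B > 0" "\<And>z. z \<in> {-R..R} \<Longrightarrow> \<bar>\<psi> z\<bar> \<le> B"
  proof -
    have "bounded (\<psi> ` {-R..R})" by (rule compact_imp_bounded, rule compact_continuous_image[OF \<psi>c]) simp
    then obtain B where "B > 0" "\<forall>x\<in>\<psi> ` {-R..R}. norm x \<le> B" unfolding bounded_pos by blast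
    then show ?thesis using that by auto
  qed
  define K where "K = KK T c m0"
  define yv where "yv = (\<lambda>p::(real \<Rightarrow>\<^sub>C real) \<times> real. \<lambda>t. \<psi> (snd p + apply_bcontfun (fst p) t))"
  define U where "U = (\<lambda>p t. yv p T + integral {0..t} (yv p))"
  define W where "W = (\<lambda>p s. f s (U p s) (yv p s))"
  define NG where "NG = (\<lambda>p t. integral {0..cl T t} (W p))"
  define NX where "NX = (\<lambda>p. max (-m0) (min m0 (snd p - \<sigma> * integral {0..T} (yv p))))"
  define \<Phi> where "\<Phi> = (\<lambda>p. (Bcontfun (NG p), NX p))"
  have inR: "snd p + apply_bcontfun (fst p) t \<in> {-R..R}" if p: "p \<in> K" for p t
  proof -
    have "\<bar>apply_bcontfun (fst p) t\<bar> \<le> m0" using KK_bound[OF p[unfolded K_def] T0 c0] unfolding m0_def .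
    moreover have "\<bar>snd p\<bar> \<le> m0" using p unfolding K_def KK_def by auto
    ultimately show ?thesis unfolding R_def by (auto simp: abs_le_iff)
  qed
  have yc: "continuous_on UNIV (yv p)" if p: "p \<in> K" for p
    unfolding yv_def
    by (rule continuous_on_compose2[OF \<psi>c]) (use inR[OF p] in \<open>auto intro!: continuous_intros\<close>)
  have ycT: "continuous_on {0..T} (yv p)" if p: "p \<in> K" for p using continuous_on_subset[OF yc[OF p]] by simp
  have yb: "\<bar>yv p t\<bar> \<le> B" if p: "p \<in> K" for p t unfolding yv_def using B(2) inR[OF p] by blast
  have Uc: "continuous_on {0..T} (U p)" if p: "p \<in> K" for p
    unfolding U_def by (intro continuous_on_add continuous_on_const int_cont[OF ycT[OF p] yb[OF p]])
  have Ub: "\<bar>U p t\<bar> \<le> B + B * T" if p: "p \<in> K" and t: "t \<in> {0..T}" for p t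
  proof -
    have "\<bar>integral {0..t} (yv p)\<bar> \<le> B * t" by (rule int_bound[OF ycT[OF p] yb[OF p] t])
    also have "\<dots> \<le> B * T" using t B by (intro mult_left_mono) auto
    finally show ?thesis unfolding U_def using yb[OF p, of T] by linarith
  qed
  have Wc: "continuous_on {0..T} (W p)" if p: "p \<in> K" for p
  proof -
    have "continuous_on {0..T} (\<lambda>s. (\<lambda>(t, x, y). f t x y) (s, U p s, yv p s))"
      by (rule continuous_on_compose2[OF fcont]) (auto intro!: continuous_intros Uc[OF p] ycT[OF p])
    then show ?thesis unfolding W_def by simp
  qed
  have Wb: "\<bar>W p s\<bar> \<le> c" if "s \<in> {0..T}" for p s unfolding W_def using fb[OF that] .
  have NGlip: "\<bar>NG p s - NG p t\<bar> \<le> c * \<bar>s - t\<bar>" if p: "p \<in> K" for p s t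
  proof -
    have "\<bar>NG p s - NG p t\<bar> \<le> c * \<bar>cl T s - cl T t\<bar>"
      unfolding NG_def by (rule int_lip[OF Wc[OF p] Wb cl_in[OF T0] cl_in[OF T0]])
    also have "\<dots> \<le> c * \<bar>s - t\<bar>" by (rule mult_left_mono[OF cl_lip[OF T0] c0])
    finally show ?thesis .
  qed
  have NGbd: "\<bar>NG p t\<bar> \<le> c * T" if p: "p \<in> K" for p t
  proof -
    have "\<bar>NG p t\<bar> \<le> c * cl T t" unfolding NG_def by (rule int_bound[OF Wc[OF p] Wb cl_in[OF T0]])
    also have "\<dots> \<le> c * T" using cl_in[OF T0, of t] c0 by (intro mult_left_mono) auto
    finally show ?thesis .
  qed
  have NGc: "continuous_on UNIV (NG p)" if p: "p \<in> K" for p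
    unfolding NG_def
    by (rule continuous_on_compose2[OF int_cont[OF Wc[OF p] Wb] cl_cont]) (use cl_in[OF T0] in auto)
  have NGbc: "NG p \<in> bcontfun" if p: "p \<in> K" for p
    by (rule bcontfun_normI[OF NGc[OF p]]) (use NGbd[OF p] in simp)
  have NGE: "apply_bcontfun (Bcontfun (NG p)) = NG p" if p: "p \<in> K" for p
    using NGbc[OF p] by (simp add: Bcontfun_inverse)
  have \<Phi>K: "\<Phi> p \<in> K" if p: "p \<in> K" for p
  proof -
    have "NG p t = NG p (cl T t)" for t unfolding NG_def using cl_id[OF cl_in[OF T0]] by simp
    moreover have "NG p 0 = 0" unfolding NG_def cl_def using T0 by simp
    moreover have "\<bar>NX p\<bar> \<le> m0" unfolding NX_def using m00 by auto
    ultimately show ?thesis unfolding \<Phi>_def K_def KK_def using NGE[OF p] NGlip[OF p] by auto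
  qed
  have \<Phi>c: "continuous_on K \<Phi>"
    unfolding continuous_on_iff
  proof (intro ballI allI impI)
    fix q e assume q: "q \<in> K" and e: "(e::real) > 0"
    have \<psi>uc: "uniformly_continuous_on {-R..R} \<psi>" by (rule compact_uniformly_continuous[OF \<psi>c]) simp
    define Bu where "Bu = B + B * T"
    define Cb where "Cb = {0..T} \<times> {-Bu..Bu} \<times> {-B..B}"
    have fuc: "uniformly_continuous_on Cb (\<lambda>(t, x, y). f t x y)"
      by (rule compact_uniformly_continuous[OF continuous_on_subset[OF fcont]])
        (auto simp: Cb_def intro!: compact_Times)
    define \<epsilon>2 where "\<epsilon>2 = e / (4 * (T + 1))"
    have \<epsilon>2: "\<epsilon>2 > 0" unfolding \<epsilon>2_def using e T by simp
    obtain d2 where d2: "d2 > 0" "\<And>x x'. x \<in> Cb \<Longrightarrow> x' \<in> Cb \<Longrightarrow> dist x' x < d2 \<Longrightarrow>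
        dist ((\<lambda>(t, x, y). f t x y) x') ((\<lambda>(t, x, y). f t x y) x) < \<epsilon>2"
      using fuc \<epsilon>2 unfolding uniformly_continuous_on_def by metis
    define \<epsilon>1 where "\<epsilon>1 = min (e / (4 * (T + 1))) (d2 / (T + 3))"
    have \<epsilon>1: "\<epsilon>1 > 0" unfolding \<epsilon>1_def using e T d2 by simp
    obtain d1 where d1: "d1 > 0" "\<And>z z'. z \<in> {-R..R} \<Longrightarrow> z' \<in> {-R..R} \<Longrightarrow> dist z' z < d1 \<Longrightarrow>
        dist (\<psi> z') (\<psi> z) < \<epsilon>1"
      using \<psi>uc \<epsilon>1 unfolding uniformly_continuous_on_def by metis
    define d where "d = min (d1 / 2) (e / 4)"
    show "\<exists>d>0. \<forall>p\<in>K. dist p q < d \<longrightarrow> dist (\<Phi> p) (\<Phi> q) < e"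
    proof (intro exI[of _ d] conjI ballI impI)
      show "d > 0" unfolding d_def using d1 e by simp
      fix p assume p: "p \<in> K" and pq: "dist p q < d"
      have npq: "norm (p - q) < d" using pq by (simp add: dist_norm)
      have "norm (snd p - snd q) \<le> norm (p - q)"
        using norm_snd_le[of "snd p - snd q" "fst p - fst q"] by (cases p, cases q) simp
      then have sd: "\<bar>snd p - snd q\<bar> < d" using npq by simp
      have fd: "\<bar>apply_bcontfun (fst p) t - apply_bcontfun (fst q) t\<bar> < d" for t
      proof -
        have "norm (apply_bcontfun (fst p - fst q) t) \<le> norm (fst p - fst q)" by (rule norm_bounded)
        also have "\<dots> \<le> norm (p - q)"
          using norm_fst_le[of "fst p - fst q" "snd p - snd q"] by (cases p, cases q) simp
        finally show ?thesis using npq by simp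
      qed
      have ydiff: "\<bar>yv p t - yv q t\<bar> < \<epsilon>1" for t
      proof -
        have "dist (snd p + apply_bcontfun (fst p) t) (snd q + apply_bcontfun (fst q) t) < d1"
          using sd fd[of t] unfolding d_def dist_real_def by linarith
        from d1(2)[OF inR[OF q] inR[OF p] this] show ?thesis unfolding yv_def dist_real_def .
      qed
      have ydiffle: "\<bar>yv p t - yv q t\<bar> \<le> \<epsilon>1" for t using ydiff[of t] by simp
      have Udiff: "\<bar>U p t - U q t\<bar> \<le> \<epsilon>1 + \<epsilon>1 * T" if t: "t \<in> {0..T}" for t
      proof -
        have "\<bar>integral {0..t} (yv p) - integral {0..t} (yv q)\<bar> \<le> \<epsilon>1 * t"
          by (rule int_diff_bound[OF ycT[OF p] ycT[OF q] ydiffle t])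
        also have "\<dots> \<le> \<epsilon>1 * T" using t \<epsilon>1 by (intro mult_left_mono) auto
        finally show ?thesis unfolding U_def using ydiffle[of T] by linarith
      qed
      have Wdiff: "\<bar>W p s - W q s\<bar> \<le> \<epsilon>2" if s: "s \<in> {0..T}" for s
      proof -
        have inC: "(s, U r s, yv r s) \<in> Cb" if r: "r \<in> K" for r
          using s Ub[OF r s] yb[OF r, of s] unfolding Cb_def Bu_def by (auto simp: abs_le_iff)
        have "dist (s, U p s, yv p s) (s, U q s, yv q s) \<le> \<bar>U p s - U q s\<bar> + \<bar>yv p s - yv q s\<bar>"
          by (rule dist_triple)
        also have "\<dots> < \<epsilon>1 + \<epsilon>1 * T + \<epsilon>1" using Udiff[OF s] ydiff[of s] by linarith
        also have "\<dots> = \<epsilon>1 * (T + 2)" by (simp add: algebra_simps)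
        also have "\<dots> \<le> d2 / (T + 3) * (T + 2)" unfolding \<epsilon>1_def using T by (intro mult_right_mono) auto
        also have "\<dots> < d2" using T d2 by (simp add: field_simps)
        finally have "dist (s, U p s, yv p s) (s, U q s, yv q s) < d2" .
        from d2(2)[OF inC[OF q] inC[OF p] this] show ?thesis unfolding W_def dist_real_def by simp
      qed
      have NGdiff: "\<bar>NG p t - NG q t\<bar> \<le> \<epsilon>2 * T" for t
      proof -
        have "\<bar>NG p t - NG q t\<bar> \<le> \<epsilon>2 * cl T t"
          unfolding NG_def by (rule int_diff_bound[OF Wc[OF p] Wc[OF q] Wdiff cl_in[OF T0]])
        also have "\<dots> \<le> \<epsilon>2 * T" using cl_in[OF T0, of t] \<epsilon>2 by (intro mult_left_mono) auto
        finally show ?thesis .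
      qed
      have n1: "norm (Bcontfun (NG p) - Bcontfun (NG q)) \<le> \<epsilon>2 * T"
        by (rule norm_bound) (use NGdiff in \<open>simp add: NGE[OF p] NGE[OF q]\<close>)
      have Ydiff: "\<bar>integral {0..T} (yv p) - integral {0..T} (yv q)\<bar> \<le> \<epsilon>1 * T"
        by (rule int_diff_bound[OF ycT[OF p] ycT[OF q] ydiffle]) (use T0 in simp)
      have n2: "\<bar>NX p - NX q\<bar> \<le> \<bar>snd p - snd q\<bar> + \<epsilon>1 * T"
      proof -
        have "\<bar>NX p - NX q\<bar> \<le> \<bar>(snd p - \<sigma> * integral {0..T} (yv p)) - (snd q - \<sigma> * integral {0..T} (yv q))\<bar>"
          unfolding NX_def by (rule clamp_lip[OF m00])
        also have "\<dots> \<le> \<bar>snd p - snd q\<bar> + \<bar>\<sigma>\<bar> * \<bar>integral {0..T} (yv p) - integral {0..T} (yv q)\<bar>"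
          by (simp add: abs_mult[symmetric] algebra_simps abs_triangle_ineq4[THEN order_trans])
        also have "\<dots> \<le> \<bar>snd p - snd q\<bar> + \<epsilon>1 * T" using \<sigma>(1) Ydiff by auto
        finally show ?thesis .
      qed
      have "dist (\<Phi> p) (\<Phi> q) = norm (Bcontfun (NG p) - Bcontfun (NG q), NX p - NX q)"
        unfolding \<Phi>_def dist_norm by simp
      also have "\<dots> \<le> norm (Bcontfun (NG p) - Bcontfun (NG q)) + norm (NX p - NX q)" by (rule norm_Pair_le)
      also have "\<dots> \<le> \<epsilon>2 * T + (\<bar>snd p - snd q\<bar> + \<epsilon>1 * T)" using n1 n2 by simp
      also have "\<dots> < e / 4 + (e / 4 + e / 4)"
      proof -
        have "\<epsilon>2 * T \<le> e / 4" unfolding \<epsilon>2_def using T e by (simp add: field_simps)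
        moreover have "\<epsilon>1 * T \<le> e / 4"
        proof -
          have "\<epsilon>1 * T \<le> e / (4 * (T + 1)) * T" unfolding \<epsilon>1_def using T by (intro mult_right_mono) auto
          also have "\<dots> \<le> e / 4" using T e by (simp add: field_simps)
          finally show ?thesis .
        qed
        moreover have "\<bar>snd p - snd q\<bar> < e / 4" using sd unfolding d_def by linarith
        ultimately show ?thesis by linarith
      qed
      also have "\<dots> < e" using e by simp
      finally show "dist (\<Phi> p) (\<Phi> q) < e" .
    qed
  qed
  have Kne: "K \<noteq> {}" using KK_nonempty[OF m00 c0] unfolding K_def by blast
  have "\<exists>p\<in>K. \<Phi> p = p"
    by (rule schauder) (use KK_compact[OF T0 c0] KK_convex Kne \<Phi>c \<Phi>K in \<open>auto simp: K_def\<close>)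
  then obtain p where p: "p \<in> K" "\<Phi> p = p" by blast
  have fstp: "apply_bcontfun (fst p) = NG p" using p(2) NGE[OF p(1)] unfolding \<Phi>_def by (metis fst_conv)
  have sndp: "snd p = NX p" using p(2) unfolding \<Phi>_def by (metis snd_conv)
  define Y where "Y = integral {0..T} (yv p)"
  have Gb: "\<bar>apply_bcontfun (fst p) t\<bar> \<le> m0" for t
    using KK_bound[OF p(1)[unfolded K_def] T0 c0] unfolding m0_def .
  have sY: "\<sigma> * Y = integral {0..T} (\<lambda>t. \<sigma> * yv p t)" unfolding Y_def by (simp add: integral_mult_right)
  have sint: "(\<lambda>t. \<sigma> * yv p t) integrable_on {0..T}"
    by (intro integrable_continuous_interval continuous_on_mult continuous_on_const ycT[OF p(1)])
  have zin: "snd p + apply_bcontfun (fst p) t \<in> {-a<..<a}" for t using inR[OF p(1)] Rsub by blast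
  have pos: "\<sigma> * Y \<ge> 0" if "snd p = m0"
    unfolding sY
  proof (rule integral_nonneg[OF sint])
    fix t
    have "snd p + apply_bcontfun (fst p) t \<ge> 0" using that Gb[of t] by (auto simp: abs_le_iff)
    then show "0 \<le> \<sigma> * yv p t" unfolding yv_def using \<sigma>(2)[OF zin] by blast
  qed
  have neg: "\<sigma> * Y \<le> 0" if "snd p = - m0"
  proof -
    have "integral {0..T} (\<lambda>t. \<sigma> * yv p t) \<le> integral {0..T} (\<lambda>t. 0::real)"
    proof (rule integral_le[OF sint integrable_0])
      fix t
      have "snd p + apply_bcontfun (fst p) t \<le> 0" using that Gb[of t] by (auto simp: abs_le_iff)
      then show "\<sigma> * yv p t \<le> 0" unfolding yv_def using \<sigma>(3)[OF zin] by blast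
    qed
    then show ?thesis unfolding sY by simp
  qed
  have "\<sigma> * Y = 0"
  proof -
    have e: "snd p = max (- m0) (min m0 (snd p - \<sigma> * Y))" using sndp unfolding NX_def Y_def .
    show ?thesis
    proof (cases "snd p - \<sigma> * Y > m0")
      case True
      then have "snd p = m0" using e m00 by auto
      then show ?thesis using pos True by linarith
    next
      case False
      show ?thesis
      proof (cases "snd p - \<sigma> * Y < - m0")
        case True
        then have "snd p = - m0" using e m00 by auto
        then show ?thesis using neg True by linarith
      next
        case False2: False
        then have "snd p = snd p - \<sigma> * Y" using e False by auto
        then show ?thesis by simp
      qed
    qed
  qed
  then have Y0: "Y = 0" using \<sigma>(1) by auto
  define u where "u = U p"
  define u' where "u' = yv p"
  define w where "w = W p"
  have phiu: "\<phi> (u' s) = snd p + integral {0..s} w" if s: "s \<in> {0..T}" for s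
  proof -
    have "\<phi> (u' s) = snd p + apply_bcontfun (fst p) s" unfolding u'_def yv_def using \<phi>\<psi>[OF zin] .
    also have "\<dots> = snd p + integral {0..s} w" unfolding fstp NG_def w_def using cl_id[OF s] by simp
    finally show ?thesis .
  qed
  have sol: "is_solution \<phi> f T u"
    unfolding is_solution_def
  proof (rule exI[of _ u'], rule exI[of _ w], intro conjI ballI)
    fix t assume t: "t \<in> {0..T}"
    show "(u has_real_derivative u' t) (at t within {0..T})"
      unfolding u_def U_def u'_def
      using DERIV_add[OF DERIV_const integral_has_real_derivative[OF ycT[OF p(1)] t]] by simp
    have d: "((\<lambda>s. snd p + integral {0..s} w) has_real_derivative w t) (at t within {0..T})"
      using DERIV_add[OF DERIV_const integral_has_real_derivative[OF Wc[OF p(1)] t]] unfolding w_def by simp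
    show "((\<lambda>s. \<phi> (u' s)) has_real_derivative w t) (at t within {0..T})"
      by (rule has_field_derivative_transform_within[OF d zero_less_one t]) (simp add: phiu)
    show "w t = f t (u t) (u' t)" unfolding w_def W_def u_def u'_def ..
  next
    show "continuous_on {0..T} u'" unfolding u'_def by (rule ycT[OF p(1)])
    show "continuous_on {0..T} w" unfolding w_def by (rule Wc[OF p(1)])
    show "u T = u 0" unfolding u_def U_def using Y0 unfolding Y_def by simp
    show "u 0 = u' T" unfolding u_def U_def u'_def by simp
  qed
  then show ?thesis by blast
qed

end
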